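(* Let $G$ be a compactly generated, totally disconnected, locally compact group with modular function $\Delta$, and let $\Gamma$ be a Cayley–Abels graph for $G$. Let $\alpha$ be a vertex of $\Gamma$, let $B_1,\dots,B_n$ be the orbits of $G_\alpha$ on the set $\Gamma(\alpha)$ of neighbours of $\alpha$, and for each $i$ choose $g_i\in G$ with $\alpha g_i\in B_i$. Then $$\mathrm{im}(\Delta)=\left\langle \frac{|(\alpha g_1)G_\alpha|}{|(\alpha g_1^{-1})G_\alpha|},\dots,\frac{|(\alpha g_n)G_\alpha|}{|(\alpha g_n^{-1})G_\alpha|}\right\rangle\le \mathbb{Q}^{+}.$$ In particular, $\mathrm{im}(\Delta)$ is a finitely generated free abelian subgroup of the multiplicative group of positive rationals.
   Context: Groups act on the right. A Cayley–Abels graph for a totally disconnected, locally compact group $G$ is a connected, locally finite simple graph with an action of $G$ by automorphisms that is vertex-transitive with compact open vertex stabilizers. The modular function $\Delta\colon G\to\mathbb{R}^{+}$ is defined via a right-invariant Haar measure $\mu$ by $\mu(gA)=\Delta(g)\mu(A)$; equivalently, for any compact open subgroup $U$, $\Delta(g)=|U:U\cap g^{-1}Ug|/|g^{-1}Ug:U\cap g^{-1}Ug|$. *)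

theory Defs
  imports "HOL-Analysis.Analysis" "HOL-Algebra.Coset" "HOL-Algebra.Generated_Groups"
begin

definition totally_disconnected_space :: "'a topology \<Rightarrow> bool" where
  "totally_disconnected_space T \<longleftrightarrow>
     (\<forall>x\<in>topspace T. connected_component_of_set T x = {x})"

definition tdlc_group :: "('a, 'b) monoid_scheme \<Rightarrow> 'a topology \<Rightarrow> bool" where
  "tdlc_group G T \<longleftrightarrow> group G \<and> topspace T = carrier G
     \<and> continuous_map (prod_topology T T) T (\<lambda>(x, y). x \<otimes>\<^bsub>G\<^esub> y)
     \<and> continuous_map T T (\<lambda>x. inv\<^bsub>G\<^esub> x)
     \<and> Hausdorff_space T \<and> locally_compact_space T
     \<and> totally_disconnected_space T"

definition compactly_generated :: "('a, 'b) monoid_scheme \<Rightarrow> 'a topology \<Rightarrow> bool" where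
  "compactly_generated G T \<longleftrightarrow>
     (\<exists>K. K \<subseteq> carrier G \<and> compactin T K \<and> generate G K = carrier G)"

definition compact_open_subgroup :: "('a, 'b) monoid_scheme \<Rightarrow> 'a topology \<Rightarrow> 'a set \<Rightarrow> bool" where
  "compact_open_subgroup G T U \<longleftrightarrow> subgroup U G \<and> compactin T U \<and> openin T U"

definition sg_index :: "('a, 'b) monoid_scheme \<Rightarrow> 'a set \<Rightarrow> 'a set \<Rightarrow> nat" where
  "sg_index G K H = card ((\<lambda>k. H #>\<^bsub>G\<^esub> k) ` K)"

definition conj_sg :: "('a, 'b) monoid_scheme \<Rightarrow> 'a \<Rightarrow> 'a set \<Rightarrow> 'a set" where
  "conj_sg G g U = (inv\<^bsub>G\<^esub> g <#\<^bsub>G\<^esub> U) #>\<^bsub>G\<^esub> g"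

definition modular_function :: "('a, 'b) monoid_scheme \<Rightarrow> 'a topology \<Rightarrow> 'a \<Rightarrow> real" where
  "modular_function G T g =
     (let U = (SOME U. compact_open_subgroup G T U); V = conj_sg G g U in
      real (sg_index G U (U \<inter> V)) / real (sg_index G V (U \<inter> V)))"

(* Cayley-Abels graph: vertex set = the type 'v, simple graph with edge relation E,
   right action act of G (written \<alpha> g = act \<alpha> g). *)
definition vertex_stabilizer :: "('a, 'b) monoid_scheme \<Rightarrow> ('v \<Rightarrow> 'a \<Rightarrow> 'v) \<Rightarrow> 'v \<Rightarrow> 'a set" where
  "vertex_stabilizer G act v = {g \<in> carrier G. act v g = v}"

definition cayley_abels_graph ::
  "('a, 'b) monoid_scheme \<Rightarrow> 'a topology \<Rightarrow> ('v \<Rightarrow> 'v \<Rightarrow> bool) \<Rightarrow> ('v \<Rightarrow> 'a \<Rightarrow> 'v) \<Rightarrow> bool" where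
  "cayley_abels_graph G T E act \<longleftrightarrow>
     (\<forall>x y. E x y \<longrightarrow> E y x) \<and> (\<forall>x. \<not> E x x)
     \<and> (\<forall>x y. E\<^sup>*\<^sup>* x y)
     \<and> (\<forall>x. finite {y. E x y})
     \<and> (\<forall>x. act x \<one>\<^bsub>G\<^esub> = x)
     \<and> (\<forall>x. \<forall>g\<in>carrier G. \<forall>h\<in>carrier G. act (act x g) h = act x (g \<otimes>\<^bsub>G\<^esub> h))
     \<and> (\<forall>x y. \<forall>g\<in>carrier G. E x y \<longleftrightarrow> E (act x g) (act y g))
     \<and> (\<forall>x y. \<exists>g\<in>carrier G. act x g = y)
     \<and> (\<forall>x. compactin T (vertex_stabilizer G act x) \<and> openin T (vertex_stabilizer G act x))"

definition stab_orbit :: "('a, 'b) monoid_scheme \<Rightarrow> ('v \<Rightarrow> 'a \<Rightarrow> 'v) \<Rightarrow> 'v \<Rightarrow> 'v \<Rightarrow> 'v set" where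
  "stab_orbit G act \<alpha> v = (\<lambda>h. act v h) ` vertex_stabilizer G act \<alpha>"

definition pos_real_group :: "real monoid" where
  "pos_real_group = \<lparr>carrier = {x. x > 0}, mult = (*), one = 1\<rparr>"

end

theory Submission
  imports Defs
begin


lemma card_image_rel:
  assumes "\<forall>x\<in>S. \<forall>y\<in>S. f x = f y \<longleftrightarrow> g x = g y"
  shows "card (f ` S) = card (g ` S) \<and> (finite (f ` S) \<longleftrightarrow> finite (g ` S))"
proof -
  define h where "h = (\<lambda>y. g (SOME x. x \<in> S \<and> f x = y))"
  have hf: "h (f x) = g x" if "x \<in> S" for x
  proof -
    have "\<exists>z. z \<in> S \<and> f z = f x" using that by blast
    then have "(SOME z. z \<in> S \<and> f z = f x) \<in> S \<and> f (SOME z. z \<in> S \<and> f z = f x) = f x"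
      by (rule someI_ex)
    then show ?thesis unfolding h_def using assms that by metis
  qed
  have "bij_betw h (f ` S) (g ` S)"
    unfolding bij_betw_def inj_on_def
  proof (intro conjI ballI impI)
    fix a b assume "a \<in> f ` S" "b \<in> f ` S" "h a = h b"
    then show "a = b" using hf assms by auto
  next
    show "h ` f ` S = g ` S" using hf by (auto simp: image_iff)
  qed
  then show ?thesis using bij_betw_same_card bij_betw_finite by blast
qed

lemma finite_image_coarser:
  assumes "\<forall>x\<in>S. \<forall>y\<in>S. g x = g y \<longrightarrow> f x = f y" "finite (g ` S)"
  shows "finite (f ` S)"
proof -
  define h where "h = (\<lambda>y. f (SOME x. x \<in> S \<and> g x = y))"
  have hf: "h (g x) = f x" if "x \<in> S" for x
  proof -
    have "\<exists>z. z \<in> S \<and> g z = g x" using that by blast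
    then have "(SOME z. z \<in> S \<and> g z = g x) \<in> S \<and> g (SOME z. z \<in> S \<and> g z = g x) = g x"
      by (rule someI_ex)
    then show ?thesis unfolding h_def using assms that by metis
  qed
  have "f ` S = h ` g ` S" using hf by (auto simp: image_iff)
  then show ?thesis using assms(2) by simp
qed

context group begin

definition cos :: "'a set \<Rightarrow> 'a set \<Rightarrow> 'a set set" where
  "cos H K = (\<lambda>k. H #> k) ` K"

lemma rcos_eq_iff:
  assumes "subgroup H G" "x \<in> carrier G" "y \<in> carrier G"
  shows "H #> x = H #> y \<longleftrightarrow> x \<otimes> inv y \<in> H"
proof
  assume "H #> x = H #> y"
  then have "x \<in> H #> y" using rcos_self assms by blast
  then show "x \<otimes> inv y \<in> H" using subgroup.rcos_module_imp[OF assms(1) is_group] assms by blast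
next
  assume "x \<otimes> inv y \<in> H"
  then have "x \<in> H #> y" using subgroup.rcos_module_rev[OF assms(1) is_group] assms by blast
  then show "H #> x = H #> y" using repr_independence assms by metis
qed

lemma idx_mult:
  assumes D: "subgroup D G" and C: "subgroup C G" and A: "subgroup A G"
    and DC: "D \<subseteq> C" and CA: "C \<subseteq> A"
    and f1: "finite (cos C A)" and f2: "finite (cos D C)"
  shows "finite (cos D A) \<and> card (cos D A) = card (cos C A) * card (cos D C)"
proof -
  have Acar: "A \<subseteq> carrier G" using A subgroup.subset by blast
  have Ccar: "C \<subseteq> carrier G" using C subgroup.subset by blast
  have Dcar: "D \<subseteq> carrier G" using D subgroup.subset by blast
  define fib where "fib Y = {X \<in> cos D A. X \<subseteq> Y}" for Y
  have U: "cos D A = \<Union> (fib ` cos C A)"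
  proof
    show "cos D A \<subseteq> \<Union> (fib ` cos C A)"
    proof
      fix X assume "X \<in> cos D A"
      then obtain a where a: "a \<in> A" "X = D #> a" unfolding cos_def by auto
      have "D #> a \<subseteq> C #> a" using DC unfolding r_coset_def by auto
      then have "X \<in> fib (C #> a)" using a \<open>X \<in> cos D A\<close> unfolding fib_def by auto
      then show "X \<in> \<Union> (fib ` cos C A)" using a unfolding cos_def by auto
    qed
  qed (auto simp: fib_def)
  have fibeq: "fib (C #> a) = (\<lambda>X. X #> a) ` cos D C" if a: "a \<in> A" for a
  proof
    show "fib (C #> a) \<subseteq> (\<lambda>X. X #> a) ` cos D C"
    proof
      fix X assume "X \<in> fib (C #> a)"
      then obtain b where b: "b \<in> A" "X = D #> b" "D #> b \<subseteq> C #> a"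
        unfolding fib_def cos_def by auto
      have bc: "b \<in> carrier G" "a \<in> carrier G" using a b Acar by auto
      have "b \<in> C #> a" using b rcos_self[OF bc(1) D] by auto
      then have c: "b \<otimes> inv a \<in> C" using subgroup.rcos_module_imp[OF C is_group] bc by blast
      have "D #> (b \<otimes> inv a) #> a = D #> b"
        using bc Dcar by (simp add: coset_mult_assoc m_assoc)
      moreover have "D #> (b \<otimes> inv a) \<in> cos D C" using c unfolding cos_def by blast
      ultimately show "X \<in> (\<lambda>X. X #> a) ` cos D C" using b(2) by (metis image_eqI)
    qed
  next
    show "(\<lambda>X. X #> a) ` cos D C \<subseteq> fib (C #> a)"
    proof
      fix X assume "X \<in> (\<lambda>X. X #> a) ` cos D C"
      then obtain c where c: "c \<in> C" "X = D #> c #> a" unfolding cos_def by auto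
      have cc: "c \<in> carrier G" "a \<in> carrier G" using a c Acar Ccar by auto
      have X: "X = D #> (c \<otimes> a)" using c cc Dcar by (simp add: coset_mult_assoc)
      have "c \<in> A" using c CA by blast
      then have "c \<otimes> a \<in> A" using subgroup.m_closed[OF A] a by blast
      moreover have "D #> (c \<otimes> a) \<subseteq> C #> a"
      proof
        fix x assume "x \<in> D #> (c \<otimes> a)"
        then obtain d where d: "d \<in> D" "x = d \<otimes> (c \<otimes> a)" unfolding r_coset_def by auto
        have dc: "d \<in> carrier G" using d Dcar by auto
        have "x = (d \<otimes> c) \<otimes> a" using d dc cc by (simp add: m_assoc)
        moreover have "d \<otimes> c \<in> C" using subgroup.m_closed[OF C] d c DC by blast
        ultimately show "x \<in> C #> a" unfolding r_coset_def by auto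
      qed
      ultimately show "X \<in> fib (C #> a)" unfolding fib_def cos_def X by auto
    qed
  qed
  have injt: "inj_on (\<lambda>X. X #> a) (cos D C)" if a: "a \<in> carrier G" for a
  proof (rule inj_onI)
    fix X Y assume XY: "X \<in> cos D C" "Y \<in> cos D C" "X #> a = Y #> a"
    have "X \<subseteq> carrier G" "Y \<subseteq> carrier G" using XY Ccar Dcar unfolding cos_def r_coset_def by auto
    then have "X #> a #> inv a = X" "Y #> a #> inv a = Y" using a by (simp_all add: coset_mult_assoc)
    then show "X = Y" using XY by metis
  qed
  have cardfib: "finite (fib Y) \<and> card (fib Y) = card (cos D C)" if Y: "Y \<in> cos C A" for Y
  proof -
    obtain a where a: "a \<in> A" "Y = C #> a" using Y unfolding cos_def by auto
    have ac: "a \<in> carrier G" using a Acar by auto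
    show ?thesis using fibeq[OF a(1)] card_image[OF injt[OF ac]] a f2 by auto
  qed
  have disj: "fib Y \<inter> fib Y' = {}" if YY: "Y \<in> cos C A" "Y' \<in> cos C A" "Y \<noteq> Y'" for Y Y'
  proof (rule ccontr)
    assume "fib Y \<inter> fib Y' \<noteq> {}"
    then obtain X where X: "X \<in> cos D A" "X \<subseteq> Y" "X \<subseteq> Y'" unfolding fib_def by auto
    then obtain b where b: "b \<in> A" "X = D #> b" unfolding cos_def by auto
    have bc: "b \<in> carrier G" using b Acar by auto
    have "b \<in> X" using b(2) rcos_self[OF bc D] by simp
    then have bY: "b \<in> Y \<inter> Y'" using X by auto
    have "Y \<in> rcosets C" "Y' \<in> rcosets C" using YY Acar unfolding cos_def RCOSETS_def by auto
    then have "disjnt Y Y'" using rcos_disjoint[OF C] YY(3) unfolding pairwise_def by blast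
    then show False using bY unfolding disjnt_def by blast
  qed
  have "card (cos D A) = (\<Sum>Y\<in>cos C A. card (fib Y))"
    unfolding U by (rule card_UN_disjoint) (use f1 cardfib disj in auto)
  also have "\<dots> = card (cos C A) * card (cos D C)" using cardfib by simp
  finally show ?thesis using U f1 cardfib by auto
qed

lemma idx_mult_fin:
  assumes D: "subgroup D G" and C: "subgroup C G" and A: "subgroup A G"
    and DC: "D \<subseteq> C" and CA: "C \<subseteq> A" and f: "finite (cos D A)"
  shows "finite (cos C A) \<and> finite (cos D C)"
proof
  have Acar: "A \<subseteq> carrier G" using A subgroup.subset by blast
  show "finite (cos C A)" unfolding cos_def
  proof (rule finite_image_coarser[where g = "\<lambda>k. D #> k"])
    show "finite ((\<lambda>k. D #> k) ` A)" using f unfolding cos_def .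
    show "\<forall>x\<in>A. \<forall>y\<in>A. D #> x = D #> y \<longrightarrow> C #> x = C #> y"
    proof (intro ballI impI)
      fix x y assume xy: "x \<in> A" "y \<in> A" "D #> x = D #> y"
      have c: "x \<in> carrier G" "y \<in> carrier G" using xy Acar by auto
      have "x \<otimes> inv y \<in> D" using rcos_eq_iff[OF D c] xy by simp
      then have "x \<otimes> inv y \<in> C" using DC by auto
      then show "C #> x = C #> y" using rcos_eq_iff[OF C c] by simp
    qed
  qed
  show "finite (cos D C)" using f CA unfolding cos_def by (meson finite_subset image_mono)
qed

lemma idx_restrict:
  assumes X: "subgroup X G" and Y: "subgroup Y G" and Z: "subgroup Z G" and XZ: "X \<subseteq> Z"
    and f: "finite (cos (Z \<inter> Y) Z)"
  shows "finite (cos (X \<inter> Y) X) \<and> card (cos (X \<inter> Y) X) \<le> card (cos (Z \<inter> Y) Z)"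
proof -
  have Xcar: "X \<subseteq> carrier G" using X subgroup.subset by blast
  have XY: "subgroup (X \<inter> Y) G" "subgroup (Z \<inter> Y) G" using subgroups_Inter_pair X Y Z by auto
  have "\<forall>x\<in>X. \<forall>y\<in>X. (X \<inter> Y) #> x = (X \<inter> Y) #> y \<longleftrightarrow> (Z \<inter> Y) #> x = (Z \<inter> Y) #> y"
  proof (intro ballI)
    fix x y assume xy: "x \<in> X" "y \<in> X"
    then have "x \<otimes> inv y \<in> X" using subgroup.m_closed[OF X] subgroup.m_inv_closed[OF X] by blast
    moreover have "x \<in> carrier G" "y \<in> carrier G" using xy Xcar by auto
    ultimately show "(X \<inter> Y) #> x = (X \<inter> Y) #> y \<longleftrightarrow> (Z \<inter> Y) #> x = (Z \<inter> Y) #> y"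
      using rcos_eq_iff[OF XY(1), of x y] rcos_eq_iff[OF XY(2), of x y] XZ by blast
  qed
  then have e: "card (cos (X \<inter> Y) X) = card ((\<lambda>k. (Z \<inter> Y) #> k) ` X) \<and>
     (finite (cos (X \<inter> Y) X) \<longleftrightarrow> finite ((\<lambda>k. (Z \<inter> Y) #> k) ` X))"
    unfolding cos_def by (rule card_image_rel)
  have s: "(\<lambda>k. (Z \<inter> Y) #> k) ` X \<subseteq> cos (Z \<inter> Y) Z" unfolding cos_def using XZ by auto
  have "finite ((\<lambda>k. (Z \<inter> Y) #> k) ` X)" using s f finite_subset by blast
  moreover have "card ((\<lambda>k. (Z \<inter> Y) #> k) ` X) \<le> card (cos (Z \<inter> Y) Z)" using s f card_mono by blast
  ultimately show ?thesis using e by simp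
qed

end


context group begin

lemma cancel_l1 [simp]: "g \<in> carrier G \<Longrightarrow> x \<in> carrier G \<Longrightarrow> g \<otimes> (inv g \<otimes> x) = x"
  by (simp add: m_assoc[symmetric])
lemma cancel_l2 [simp]: "g \<in> carrier G \<Longrightarrow> x \<in> carrier G \<Longrightarrow> inv g \<otimes> (g \<otimes> x) = x"
  by (simp add: m_assoc[symmetric])

definition conjg :: "'a \<Rightarrow> 'a \<Rightarrow> 'a" where
  "conjg g u = inv g \<otimes> u \<otimes> g"

lemma conjg_closed [simp]: "g \<in> carrier G \<Longrightarrow> u \<in> carrier G \<Longrightarrow> conjg g u \<in> carrier G"
  unfolding conjg_def by simp

lemma conjg_mult: "g \<in> carrier G \<Longrightarrow> u \<in> carrier G \<Longrightarrow> v \<in> carrier G \<Longrightarrow>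
   conjg g u \<otimes> conjg g v = conjg g (u \<otimes> v)"
  unfolding conjg_def by (simp add: m_assoc)

lemma conjg_inv: "g \<in> carrier G \<Longrightarrow> u \<in> carrier G \<Longrightarrow> inv (conjg g u) = conjg g (inv u)"
  unfolding conjg_def by (simp add: inv_mult_group m_assoc)

lemma conjg_one: "g \<in> carrier G \<Longrightarrow> conjg g \<one> = \<one>"
  unfolding conjg_def by simp

lemma conjg_inj: "g \<in> carrier G \<Longrightarrow> inj_on (conjg g) (carrier G)"
proof (rule inj_onI)
  fix x y assume g: "g \<in> carrier G" and xy: "x \<in> carrier G" "y \<in> carrier G" "conjg g x = conjg g y"
  then have "g \<otimes> conjg g x \<otimes> inv g = g \<otimes> conjg g y \<otimes> inv g" by simp
  then show "x = y" using g xy unfolding conjg_def by (simp add: m_assoc)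
qed

lemma conjg_conjg: "g \<in> carrier G \<Longrightarrow> h \<in> carrier G \<Longrightarrow> u \<in> carrier G \<Longrightarrow>
   conjg h (conjg g u) = conjg (g \<otimes> h) u"
  unfolding conjg_def by (simp add: m_assoc inv_mult_group)

lemma conj_sg_eq: "U \<subseteq> carrier G \<Longrightarrow> g \<in> carrier G \<Longrightarrow> conj_sg G g U = conjg g ` U"
  unfolding conj_sg_def l_coset_def r_coset_def conjg_def by auto

lemma conj_sg_carrier: "U \<subseteq> carrier G \<Longrightarrow> g \<in> carrier G \<Longrightarrow> conj_sg G g U \<subseteq> carrier G"
proof -
  assume U: "U \<subseteq> carrier G" and g: "g \<in> carrier G"
  have "conjg g ` U \<subseteq> carrier G" using U g by auto
  then show ?thesis using conj_sg_eq[OF U g] by simp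
qed

lemma conj_subgroup:
  assumes H: "subgroup H G" and g: "g \<in> carrier G"
  shows "subgroup (conj_sg G g H) G"
proof -
  have Hc: "H \<subseteq> carrier G" using H subgroup.subset by blast
  show ?thesis unfolding conj_sg_eq[OF Hc g]
  proof (rule subgroup.intro)
    show "conjg g ` H \<subseteq> carrier G" using Hc g by auto
    show "\<one> \<in> conjg g ` H" using conjg_one[OF g] subgroup.one_closed[OF H] by (metis image_eqI)
  next
    fix x y assume "x \<in> conjg g ` H" "y \<in> conjg g ` H"
    then obtain u v where uv: "u \<in> H" "v \<in> H" "x = conjg g u" "y = conjg g v" by auto
    have "u \<in> carrier G" "v \<in> carrier G" using uv Hc by auto
    then have "x \<otimes> y = conjg g (u \<otimes> v)" using uv conjg_mult[OF g] by simp
    moreover have "u \<otimes> v \<in> H" using uv subgroup.m_closed[OF H] by blast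
    ultimately show "x \<otimes> y \<in> conjg g ` H" by blast
  next
    fix x assume "x \<in> conjg g ` H"
    then obtain u where u: "u \<in> H" "x = conjg g u" by auto
    have "u \<in> carrier G" using u Hc by auto
    then have "inv x = conjg g (inv u)" using u conjg_inv[OF g] by simp
    moreover have "inv u \<in> H" using u subgroup.m_inv_closed[OF H] by blast
    ultimately show "inv x \<in> conjg g ` H" by blast
  qed
qed

lemma conj_conj: "U \<subseteq> carrier G \<Longrightarrow> g \<in> carrier G \<Longrightarrow> h \<in> carrier G \<Longrightarrow>
   conj_sg G h (conj_sg G g U) = conj_sg G (g \<otimes> h) U"
proof -
  assume U: "U \<subseteq> carrier G" and g: "g \<in> carrier G" and h: "h \<in> carrier G"
  have "conj_sg G h (conj_sg G g U) = conjg h ` conjg g ` U"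
    using conj_sg_eq[OF U g] conj_sg_eq[OF conj_sg_carrier[OF U g] h] by simp
  also have "\<dots> = (\<lambda>u. conjg h (conjg g u)) ` U" by (simp add: image_image)
  also have "\<dots> = conjg (g \<otimes> h) ` U"
    by (rule image_cong[OF refl]) (use U g h in \<open>simp add: conjg_conjg subsetD\<close>)
  finally show ?thesis using conj_sg_eq[OF U] g h by simp
qed

lemma conj_one_sg: "U \<subseteq> carrier G \<Longrightarrow> conj_sg G \<one> U = U"
proof -
  assume U: "U \<subseteq> carrier G"
  have "conjg \<one> ` U = (\<lambda>x. x) ` U"
    by (rule image_cong[OF refl]) (use U in \<open>simp add: conjg_def subsetD\<close>)
  then show ?thesis using conj_sg_eq[OF U] by simp
qed

lemma conj_Int: "A \<subseteq> carrier G \<Longrightarrow> B \<subseteq> carrier G \<Longrightarrow> g \<in> carrier G \<Longrightarrow>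
   conj_sg G g (A \<inter> B) = conj_sg G g A \<inter> conj_sg G g B"
proof -
  assume A: "A \<subseteq> carrier G" and B: "B \<subseteq> carrier G" and g: "g \<in> carrier G"
  have AB: "A \<inter> B \<subseteq> carrier G" using A by auto
  have "conj_sg G g (A \<inter> B) = conjg g ` (A \<inter> B)" by (rule conj_sg_eq[OF AB g])
  also have "\<dots> = conjg g ` A \<inter> conjg g ` B" by (rule inj_on_image_Int[OF conjg_inj[OF g] A B])
  finally show ?thesis using conj_sg_eq[OF A g] conj_sg_eq[OF B g] by simp
qed

lemma idx_conj:
  assumes H: "subgroup H G" and K: "K \<subseteq> carrier G" and g: "g \<in> carrier G"
  shows "card (cos (conj_sg G g H) (conj_sg G g K)) = card (cos H K) \<and>
         (finite (cos (conj_sg G g H) (conj_sg G g K)) \<longleftrightarrow> finite (cos H K))"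
proof -
  have Hc: "H \<subseteq> carrier G" using H subgroup.subset by blast
  let ?H = "conj_sg G g H"
  have H': "subgroup ?H G" using conj_subgroup[OF H g] .
  have e: "cos ?H (conj_sg G g K) = (\<lambda>k. ?H #> conjg g k) ` K"
    unfolding cos_def conj_sg_eq[OF K g] by (simp add: image_image)
  have "\<forall>x\<in>K. \<forall>y\<in>K. ?H #> conjg g x = ?H #> conjg g y \<longleftrightarrow> H #> x = H #> y"
  proof (intro ballI)
    fix x y assume xy: "x \<in> K" "y \<in> K"
    then have c: "x \<in> carrier G" "y \<in> carrier G" using K by auto
    have "?H #> conjg g x = ?H #> conjg g y \<longleftrightarrow> conjg g x \<otimes> inv (conjg g y) \<in> ?H"
      using rcos_eq_iff[OF H'] c g by simp
    also have "conjg g x \<otimes> inv (conjg g y) = conjg g (x \<otimes> inv y)"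
      using c g conjg_inv conjg_mult by simp
    also have "conjg g (x \<otimes> inv y) \<in> ?H \<longleftrightarrow> x \<otimes> inv y \<in> H"
      unfolding conj_sg_eq[OF Hc g] using inj_on_image_mem_iff[OF conjg_inj[OF g] _ Hc] c by simp
    also have "\<dots> \<longleftrightarrow> H #> x = H #> y" using rcos_eq_iff[OF H c] by simp
    finally show "?H #> conjg g x = ?H #> conjg g y \<longleftrightarrow> H #> x = H #> y" .
  qed
  then have "card ((\<lambda>k. ?H #> conjg g k) ` K) = card ((\<lambda>k. H #> k) ` K) \<and>
    (finite ((\<lambda>k. ?H #> conjg g k) ` K) \<longleftrightarrow> finite ((\<lambda>k. H #> k) ` K))"
    by (rule card_image_rel)
  then show ?thesis using e unfolding cos_def by simp
qed

definition rr :: "'a set \<Rightarrow> 'a set \<Rightarrow> real" where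
  "rr A B = real (card (cos (A \<inter> B) A)) / real (card (cos (A \<inter> B) B))"

definition cm :: "'a set \<Rightarrow> 'a set \<Rightarrow> bool" where
  "cm A B \<longleftrightarrow> finite (cos (A \<inter> B) A) \<and> finite (cos (A \<inter> B) B)"

lemma card_cos_pos: "subgroup K G \<Longrightarrow> finite (cos H K) \<Longrightarrow> card (cos H K) > 0"
  unfolding cos_def using subgroup.one_closed card_gt_0_iff by fastforce

lemma cocycle:
  assumes A: "subgroup A G" and B: "subgroup B G" and C: "subgroup C G"
    and AB: "cm A B" and BC: "cm B C"
  shows "cm A C \<and> rr A B * rr B C = rr A C"
proof -
  define D where "D = A \<inter> B \<inter> C"
  have sD: "subgroup D G" unfolding D_def using subgroups_Inter_pair A B C by auto
  have sAB: "subgroup (A \<inter> B) G" and sBC: "subgroup (B \<inter> C) G" and sAC: "subgroup (A \<inter> C) G"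
    using subgroups_Inter_pair A B C by auto
  have m1f: "finite (cos D (A \<inter> B))"
    using idx_restrict[OF sAB C B Int_lower2] BC unfolding cm_def D_def by blast
  have m2f: "finite (cos D (B \<inter> C))"
  proof -
    have q: "B \<inter> C \<inter> A = D" "B \<inter> A = A \<inter> B" unfolding D_def by blast+
    show ?thesis using idx_restrict[OF sBC A B Int_lower1] AB unfolding cm_def q by blast
  qed
  have cA: "finite (cos D A) \<and> card (cos D A) = card (cos (A \<inter> B) A) * card (cos D (A \<inter> B))"
    using idx_mult[OF sD sAB A _ _ _ m1f] AB unfolding cm_def D_def by auto
  have cB1: "finite (cos D B) \<and> card (cos D B) = card (cos (A \<inter> B) B) * card (cos D (A \<inter> B))"
    using idx_mult[OF sD sAB B _ _ _ m1f] AB unfolding cm_def D_def by auto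
  have cB2: "finite (cos D B) \<and> card (cos D B) = card (cos (B \<inter> C) B) * card (cos D (B \<inter> C))"
    using idx_mult[OF sD sBC B _ _ _ m2f] BC unfolding cm_def D_def by auto
  have cC: "finite (cos D C) \<and> card (cos D C) = card (cos (B \<inter> C) C) * card (cos D (B \<inter> C))"
    using idx_mult[OF sD sBC C _ _ _ m2f] BC unfolding cm_def D_def by auto
  have DAC: "D \<subseteq> A \<inter> C" unfolding D_def by auto
  have f3: "finite (cos (A \<inter> C) A) \<and> finite (cos D (A \<inter> C))"
    using idx_mult_fin[OF sD sAC A DAC _] cA by auto
  have f4: "finite (cos (A \<inter> C) C)"
    using idx_mult_fin[OF sD sAC C DAC _] cC by auto
  have cA3: "card (cos D A) = card (cos (A \<inter> C) A) * card (cos D (A \<inter> C))"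
    using idx_mult[OF sD sAC A DAC _] f3 by auto
  have cC3: "card (cos D C) = card (cos (A \<inter> C) C) * card (cos D (A \<inter> C))"
    using idx_mult[OF sD sAC C DAC _] f3 f4 by auto
  have p: "card (cos (A \<inter> B) A) > 0" "card (cos (A \<inter> B) B) > 0" "card (cos D (A \<inter> B)) > 0"
     "card (cos (B \<inter> C) B) > 0" "card (cos (B \<inter> C) C) > 0" "card (cos D (B \<inter> C)) > 0"
     "card (cos (A \<inter> C) A) > 0" "card (cos (A \<inter> C) C) > 0" "card (cos D (A \<inter> C)) > 0"
    using AB BC unfolding cm_def
    by (simp_all add: card_cos_pos[OF A] card_cos_pos[OF B] card_cos_pos[OF C]
      card_cos_pos[OF sAB] card_cos_pos[OF sBC] card_cos_pos[OF sAC] m1f m2f f3 f4)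
  have e1: "rr A B = real (card (cos D A)) / real (card (cos D B))"
    unfolding rr_def using cA cB1 p by (simp add: nonzero_mult_divide_mult_cancel_right)
  have e2: "rr B C = real (card (cos D B)) / real (card (cos D C))"
    unfolding rr_def using cB2 cC p by (simp add: nonzero_mult_divide_mult_cancel_right)
  have e3: "rr A C = real (card (cos D A)) / real (card (cos D C))"
    unfolding rr_def using cA3 cC3 p by (simp add: nonzero_mult_divide_mult_cancel_right)
  have "card (cos D B) > 0" using cB1 p by simp
  then have "rr A B * rr B C = rr A C" unfolding e1 e2 e3 by simp
  then show ?thesis using f3 f4 unfolding cm_def by auto
qed

lemma rr_swap:
  assumes "subgroup A G" "subgroup B G" "cm A B"
  shows "cm B A \<and> rr A B * rr B A = 1"
proof -
  have "card (cos (A \<inter> B) A) > 0" "card (cos (A \<inter> B) B) > 0"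
    using card_cos_pos assms unfolding cm_def by auto
  then show ?thesis using assms unfolding cm_def rr_def by (simp add: Int_commute card_gt_0_iff)
qed

lemma rr_self: "subgroup A G \<Longrightarrow> rr A A = 1 \<and> cm A A"
proof -
  assume A: "subgroup A G"
  have "cos A A = {A}" unfolding cos_def
    using coset_join2[OF _ A] subgroup.subset[OF A] subgroup.one_closed[OF A] by blast
  then show ?thesis unfolding rr_def cm_def by simp
qed

lemma rr_conj:
  assumes A: "subgroup A G" and B: "subgroup B G" and g: "g \<in> carrier G"
  shows "rr (conj_sg G g A) (conj_sg G g B) = rr A B \<and> (cm (conj_sg G g A) (conj_sg G g B) \<longleftrightarrow> cm A B)"
proof -
  have Ac: "A \<subseteq> carrier G" "B \<subseteq> carrier G" using A B subgroup.subset by blast+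
  have sAB: "subgroup (A \<inter> B) G" using subgroups_Inter_pair A B by auto
  have i: "conj_sg G g A \<inter> conj_sg G g B = conj_sg G g (A \<inter> B)" using conj_Int Ac g by simp
  show ?thesis unfolding rr_def cm_def i using idx_conj[OF sAB Ac(1) g] idx_conj[OF sAB Ac(2) g] by simp
qed

end


context group begin

lemma cm_top:
  assumes T: "tdlc_group G T" and K: "subgroup K G" "compactin T K"
    and V: "subgroup V G" "openin T V"
  shows "finite (cos (K \<inter> V) K)"
proof -
  have top: "topspace T = carrier G" and mc: "continuous_map (prod_topology T T) T (\<lambda>(x, y). x \<otimes> y)"
    using T unfolding tdlc_group_def by auto
  have Kc: "K \<subseteq> carrier G" using K subgroup.subset by blast
  have opn: "openin T (V #> k)" if k: "k \<in> carrier G" for k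
  proof -
    have "continuous_map T (prod_topology T T) (\<lambda>x. (x, inv k))"
      by (rule continuous_map_pairedI) (use k top continuous_map_id[unfolded id_def] in auto)
    then have "continuous_map T T ((\<lambda>(x, y). x \<otimes> y) \<circ> (\<lambda>x. (x, inv k)))"
      using mc continuous_map_compose by blast
    then have cm1: "continuous_map T T (\<lambda>x. x \<otimes> inv k)" by (simp add: o_def)
    have "V #> k = {x \<in> topspace T. x \<otimes> inv k \<in> V}"
    proof
      show "V #> k \<subseteq> {x \<in> topspace T. x \<otimes> inv k \<in> V}"
      proof
        fix x assume x: "x \<in> V #> k"
        have "x \<in> carrier G" using x r_coset_subset_G[OF subgroup.subset[OF V(1)] k] by auto
        then show "x \<in> {x \<in> topspace T. x \<otimes> inv k \<in> V}"
          using x subgroup.rcos_module_imp[OF V(1) is_group k] top by auto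
      qed
      show "{x \<in> topspace T. x \<otimes> inv k \<in> V} \<subseteq> V #> k"
        using subgroup.rcos_module_rev[OF V(1) is_group k] top by auto
    qed
    then show ?thesis using openin_continuous_map_preimage[OF cm1 V(2)] by simp
  qed
  have cov: "\<forall>B\<in>(\<lambda>k. V #> k) ` K. openin T B" using opn Kc by auto
  have sub: "K \<subseteq> \<Union> ((\<lambda>k. V #> k) ` K)"
    using rcos_self[OF _ V(1)] Kc by blast
  obtain F where F: "finite F" "F \<subseteq> (\<lambda>k. V #> k) ` K" "K \<subseteq> \<Union>F"
    using K(2) cov sub unfolding compactin_def by meson
  obtain F0 where F0: "F0 \<subseteq> K" "finite F0" "F = (\<lambda>k. V #> k) ` F0"
    using finite_subset_image[OF F(1) F(2)] by blast
  have KV: "subgroup (K \<inter> V) G" using subgroups_Inter_pair K(1) V(1) by blast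
  have "cos (K \<inter> V) K \<subseteq> (\<lambda>k. (K \<inter> V) #> k) ` F0"
  proof
    fix X assume "X \<in> cos (K \<inter> V) K"
    then obtain x where x: "x \<in> K" "X = (K \<inter> V) #> x" unfolding cos_def by auto
    then obtain k0 where k0: "k0 \<in> F0" "x \<in> V #> k0" using F(3) F0(3) by auto
    have c: "x \<in> carrier G" "k0 \<in> carrier G" using x k0 F0 Kc by auto
    have "x \<otimes> inv k0 \<in> V" using subgroup.rcos_module_imp[OF V(1) is_group c(2)] k0 c by blast
    moreover have "x \<otimes> inv k0 \<in> K"
      using subgroup.m_closed[OF K(1)] subgroup.m_inv_closed[OF K(1)] x k0 F0 by blast
    ultimately have "(K \<inter> V) #> x = (K \<inter> V) #> k0" using rcos_eq_iff[OF KV c] by simp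
    then show "X \<in> (\<lambda>k. (K \<inter> V) #> k) ` F0" using x k0 by auto
  qed
  then show ?thesis using F0(2) finite_subset by blast
qed

lemma cm_co:
  assumes T: "tdlc_group G T" and A: "subgroup A G" "compactin T A" "openin T A"
    and B: "subgroup B G" "compactin T B" "openin T B"
  shows "cm A B"
  using cm_top[OF T A(1,2) B(1,3)] cm_top[OF T B(1,2) A(1,3)] unfolding cm_def
  by (simp add: Int_commute)

end

lemma pos_group: "group pos_real_group"
proof (rule groupI)
  show "\<And>x y. x \<in> carrier pos_real_group \<Longrightarrow> y \<in> carrier pos_real_group \<Longrightarrow>
      x \<otimes>\<^bsub>pos_real_group\<^esub> y \<in> carrier pos_real_group"
    unfolding pos_real_group_def by simp
  show "\<one>\<^bsub>pos_real_group\<^esub> \<in> carrier pos_real_group" unfolding pos_real_group_def by simp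
  show "\<And>x y z. x \<in> carrier pos_real_group \<Longrightarrow> y \<in> carrier pos_real_group \<Longrightarrow>
      z \<in> carrier pos_real_group \<Longrightarrow>
      x \<otimes>\<^bsub>pos_real_group\<^esub> y \<otimes>\<^bsub>pos_real_group\<^esub> z =
      x \<otimes>\<^bsub>pos_real_group\<^esub> (y \<otimes>\<^bsub>pos_real_group\<^esub> z)"
    unfolding pos_real_group_def by simp
  show "\<And>x. x \<in> carrier pos_real_group \<Longrightarrow> \<one>\<^bsub>pos_real_group\<^esub> \<otimes>\<^bsub>pos_real_group\<^esub> x = x"
    unfolding pos_real_group_def by simp
  show "\<And>x. x \<in> carrier pos_real_group \<Longrightarrow>
      \<exists>y\<in>carrier pos_real_group. y \<otimes>\<^bsub>pos_real_group\<^esub> x = \<one>\<^bsub>pos_real_group\<^esub>"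
    unfolding pos_real_group_def by simp (metis divide_pos_pos nonzero_divide_eq_eq zero_less_one order_less_irrefl)
qed

lemma pos_simps: "carrier pos_real_group = {x. x > 0}" "one pos_real_group = 1"
  "mult pos_real_group = (*)"
  unfolding pos_real_group_def by simp_all

lemma pos_inv: "x > 0 \<Longrightarrow> inv\<^bsub>pos_real_group\<^esub> x = 1 / x"
  by (rule group.inv_equality[OF pos_group]) (simp_all add: pos_simps)



context group begin

lemma act_mult: "cayley_abels_graph G T E act \<Longrightarrow> g \<in> carrier G \<Longrightarrow> h \<in> carrier G \<Longrightarrow>
   act (act x g) h = act x (g \<otimes> h)"
  unfolding cayley_abels_graph_def by blast

lemma act_one: "cayley_abels_graph G T E act \<Longrightarrow> act x \<one> = x"
  unfolding cayley_abels_graph_def by blast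

lemma act_eq_iff:
  assumes cag: "cayley_abels_graph G T E act" and xy: "x \<in> carrier G" "y \<in> carrier G"
  shows "act v (x \<otimes> inv y) = v \<longleftrightarrow> act v x = act v y"
proof
  assume h: "act v (x \<otimes> inv y) = v"
  have "act v x = act v (x \<otimes> inv y \<otimes> y)" using xy by (simp add: m_assoc)
  also have "\<dots> = act (act v (x \<otimes> inv y)) y" using act_mult[OF cag] xy by simp
  finally show "act v x = act v y" using h by simp
next
  assume h: "act v x = act v y"
  have "act v (x \<otimes> inv y) = act (act v x) (inv y)" using act_mult[OF cag] xy by simp
  also have "\<dots> = act v (y \<otimes> inv y)" using h act_mult[OF cag] xy by simp
  finally show "act v (x \<otimes> inv y) = v" using xy act_one[OF cag] by simp
qed

lemma stab_subgroup:
  assumes cag: "cayley_abels_graph G T E act"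
  shows "subgroup (vertex_stabilizer G act x) G"
proof (rule subgroup.intro)
  show "vertex_stabilizer G act x \<subseteq> carrier G" unfolding vertex_stabilizer_def by auto
  show "\<one> \<in> vertex_stabilizer G act x" unfolding vertex_stabilizer_def using act_one[OF cag] by auto
next
  fix a b assume "a \<in> vertex_stabilizer G act x" "b \<in> vertex_stabilizer G act x"
  then show "a \<otimes> b \<in> vertex_stabilizer G act x"
    unfolding vertex_stabilizer_def using act_mult[OF cag] by (metis (mono_tags, lifting) m_closed mem_Collect_eq)
next
  fix a assume a: "a \<in> vertex_stabilizer G act x"
  then have "act x (\<one> \<otimes> inv a) = x" using act_eq_iff[OF cag, of \<one> a x] act_one[OF cag]
    unfolding vertex_stabilizer_def by simp
  then show "inv a \<in> vertex_stabilizer G act x" using a unfolding vertex_stabilizer_def by simp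
qed

lemma stab_act:
  assumes cag: "cayley_abels_graph G T E act" and g: "g \<in> carrier G"
  shows "vertex_stabilizer G act (act x g) = conj_sg G g (vertex_stabilizer G act x)"
proof -
  have Wc: "vertex_stabilizer G act x \<subseteq> carrier G" unfolding vertex_stabilizer_def by auto
  have "vertex_stabilizer G act (act x g) = conjg g ` vertex_stabilizer G act x"
  proof
    show "vertex_stabilizer G act (act x g) \<subseteq> conjg g ` vertex_stabilizer G act x"
    proof
      fix y assume y: "y \<in> vertex_stabilizer G act (act x g)"
      then have yc: "y \<in> carrier G" and ya: "act (act x g) y = act x g" unfolding vertex_stabilizer_def by auto
      have "act x (g \<otimes> y \<otimes> inv g) = act (act (act x g) y) (inv g)"
        using act_mult[OF cag] g yc by simp
      also have "\<dots> = act x (g \<otimes> inv g)" using ya act_mult[OF cag] g by simp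
      finally have "g \<otimes> y \<otimes> inv g \<in> vertex_stabilizer G act x"
        using g yc act_one[OF cag] unfolding vertex_stabilizer_def by simp
      moreover have "conjg g (g \<otimes> y \<otimes> inv g) = y" unfolding conjg_def using g yc by (simp add: m_assoc)
      ultimately show "y \<in> conjg g ` vertex_stabilizer G act x" by (metis image_eqI)
    qed
    show "conjg g ` vertex_stabilizer G act x \<subseteq> vertex_stabilizer G act (act x g)"
    proof
      fix y assume "y \<in> conjg g ` vertex_stabilizer G act x"
      then obtain u where u: "u \<in> carrier G" "act x u = x" "y = conjg g u"
        unfolding vertex_stabilizer_def by auto
      have "act (act x g) y = act x (g \<otimes> (inv g \<otimes> u \<otimes> g))"
        using act_mult[OF cag] g u unfolding conjg_def by simp
      also have "\<dots> = act x (u \<otimes> g)" using g u by (simp add: m_assoc)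
      also have "\<dots> = act x g" using act_mult[OF cag, of u g x] u g by simp
      finally show "y \<in> vertex_stabilizer G act (act x g)"
        using u g unfolding vertex_stabilizer_def by simp
    qed
  qed
  then show ?thesis using conj_sg_eq[OF Wc g] by simp
qed

lemma orbit_card:
  assumes cag: "cayley_abels_graph G T E act"
  shows "card (stab_orbit G act a v) =
    card (cos (vertex_stabilizer G act a \<inter> vertex_stabilizer G act v) (vertex_stabilizer G act a))"
proof -
  let ?A = "vertex_stabilizer G act a" and ?V = "vertex_stabilizer G act v"
  have sA: "subgroup ?A G" and sAV: "subgroup (?A \<inter> ?V) G"
    using stab_subgroup[OF cag] subgroups_Inter_pair by blast+
  have "\<forall>x\<in>?A. \<forall>y\<in>?A. act v x = act v y \<longleftrightarrow> (?A \<inter> ?V) #> x = (?A \<inter> ?V) #> y"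
  proof (intro ballI)
    fix x y assume xy: "x \<in> ?A" "y \<in> ?A"
    then have c: "x \<in> carrier G" "y \<in> carrier G" unfolding vertex_stabilizer_def by auto
    have i: "x \<otimes> inv y \<in> ?A" using xy subgroup.m_closed[OF sA] subgroup.m_inv_closed[OF sA] by blast
    have "(?A \<inter> ?V) #> x = (?A \<inter> ?V) #> y \<longleftrightarrow> x \<otimes> inv y \<in> ?A \<inter> ?V" using rcos_eq_iff[OF sAV c] .
    also have "\<dots> \<longleftrightarrow> act v (x \<otimes> inv y) = v" using i c unfolding vertex_stabilizer_def by auto
    also have "\<dots> \<longleftrightarrow> act v x = act v y" using act_eq_iff[OF cag c] .
    finally show "act v x = act v y \<longleftrightarrow> (?A \<inter> ?V) #> x = (?A \<inter> ?V) #> y" by simp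
  qed
  then have "card ((\<lambda>h. act v h) ` ?A) = card ((\<lambda>k. (?A \<inter> ?V) #> k) ` ?A)"
    using card_image_rel by blast
  then show ?thesis unfolding stab_orbit_def cos_def by simp
qed

end



lemma cag_inv: "cayley_abels_graph G T E act \<Longrightarrow> x \<in> carrier G \<Longrightarrow> E u v \<Longrightarrow> E (act u x) (act v x)"
  unfolding cayley_abels_graph_def by blast

lemma cag_trans: "cayley_abels_graph G T E act \<Longrightarrow> \<exists>x\<in>carrier G. act u x = v"
  unfolding cayley_abels_graph_def by blast

lemma cag_conn: "cayley_abels_graph G T E act \<Longrightarrow> E\<^sup>*\<^sup>* u v"
  unfolding cayley_abels_graph_def by blast

theorem corollary4p3:
  fixes G :: "('a, 'b) monoid_scheme" and T :: "'a topology"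
    and E :: "'v \<Rightarrow> 'v \<Rightarrow> bool" and act :: "'v \<Rightarrow> 'a \<Rightarrow> 'v"
    and \<alpha> :: 'v and g :: "'v set \<Rightarrow> 'a"
  assumes "tdlc_group G T"
    and "compactly_generated G T"
    and "cayley_abels_graph G T E act"
    and "\<forall>B \<in> {stab_orbit G act \<alpha> v | v. E \<alpha> v}. g B \<in> carrier G \<and> act \<alpha> (g B) \<in> B"
  shows "modular_function G T ` carrier G =
           generate pos_real_group
             ((\<lambda>B. real (card (stab_orbit G act \<alpha> (act \<alpha> (g B))))
                   / real (card (stab_orbit G act \<alpha> (act \<alpha> (inv\<^bsub>G\<^esub> (g B))))))
              ` {stab_orbit G act \<alpha> v | v. E \<alpha> v})
         \<and> modular_function G T ` carrier G \<subseteq> \<rat> \<inter> {x. x > 0}"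
proof -
  have grp: "group G" using assms(1) unfolding tdlc_group_def by blast
  interpret group G by (rule grp)
  note cag = assms(3)
  let ?st = "vertex_stabilizer G act"
  define W where "W = ?st \<alpha>"
  have stsub: "\<And>x. subgroup (?st x) G" using stab_subgroup[OF cag] .
  have stco: "\<And>x. compactin T (?st x) \<and> openin T (?st x)"
    using cag unfolding cayley_abels_graph_def by blast
  have sW: "subgroup W G" unfolding W_def by (rule stsub)
  have Wc: "W \<subseteq> carrier G" using sW subgroup.subset by blast
  have cmst: "\<And>x y. cm (?st x) (?st y)" using cm_co[OF assms(1)] stsub stco by blast
  have stW: "\<And>x. x \<in> carrier G \<Longrightarrow> ?st (act \<alpha> x) = conj_sg G x W"
    using stab_act[OF cag] unfolding W_def by blast
  define D where "D x = rr W (?st (act \<alpha> x))" for x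
  have mod_eq: "modular_function G T x = D x" if x: "x \<in> carrier G" for x
  proof -
    define U where "U = (SOME U. compact_open_subgroup G T U)"
    have "compact_open_subgroup G T U" unfolding U_def
      by (rule someI[of _ W]) (use sW stco W_def in \<open>auto simp: compact_open_subgroup_def\<close>)
    then have U: "subgroup U G" "compactin T U" "openin T U" unfolding compact_open_subgroup_def by auto
    have mf: "modular_function G T x = rr U (conj_sg G x U)"
      unfolding modular_function_def rr_def sg_index_def cos_def Let_def U_def by simp
    let ?W' = "conj_sg G x W" and ?U' = "conj_sg G x U"
    have sW': "subgroup ?W' G" "subgroup ?U' G" using conj_subgroup U(1) sW x by auto
    have WU: "cm W U" using cm_co[OF assms(1) _ _ _ U] sW stco W_def by blast
    have c1: "cm U W" using cm_co[OF assms(1) U] sW stco W_def by blast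
    have c2: "cm W ?W'" using cmst[of \<alpha> "act \<alpha> x"] stW[OF x] W_def by simp
    have c3: "cm ?W' ?U'" using rr_conj[OF sW U(1) x] WU by simp
    have k1: "cm U ?W' \<and> rr U W * rr W ?W' = rr U ?W'" by (rule cocycle[OF U(1) sW sW'(1) c1 c2])
    have k2: "rr U ?W' * rr ?W' ?U' = rr U ?U'" using cocycle[OF U(1) sW'(1) sW'(2) _ c3] k1 by blast
    have k3: "rr ?W' ?U' = rr W U" using rr_conj[OF sW U(1) x] by simp
    have k4: "rr U W * rr W U = 1" using rr_swap[OF U(1) sW c1] by simp
    have "rr U ?U' = rr U ?W' * rr W U" using k2 k3 by simp
    also have "\<dots> = (rr U W * rr W ?W') * rr W U" using k1 by simp
    also have "\<dots> = rr W ?W' * (rr U W * rr W U)" by (simp add: ac_simps)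
    also have "\<dots> = rr W ?W'" using k4 by simp
    finally show ?thesis using mf D_def stW[OF x] by simp
  qed
  have Dmult: "D (x \<otimes>\<^bsub>G\<^esub> y) = D x * D y" if x: "x \<in> carrier G" and y: "y \<in> carrier G" for x y
  proof -
    have e1: "?st (act \<alpha> (x \<otimes>\<^bsub>G\<^esub> y)) = conj_sg G y (conj_sg G x W)"
      using stW[of "x \<otimes>\<^bsub>G\<^esub> y"] conj_conj[OF Wc x y] x y by simp
    have s1: "subgroup (conj_sg G y W) G" "subgroup (conj_sg G x W) G"
      "subgroup (conj_sg G y (conj_sg G x W)) G"
      using stsub stW x y e1 by metis+
    have m1: "cm W (conj_sg G y W)" using cmst[of \<alpha> "act \<alpha> y"] stW[OF y] W_def by simp
    have m2: "cm (conj_sg G y W) (conj_sg G y (conj_sg G x W))"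
      using cmst[of "act \<alpha> y" "act \<alpha> (x \<otimes>\<^bsub>G\<^esub> y)"] stW[OF y] e1 by simp
    have k: "rr W (conj_sg G y W) * rr (conj_sg G y W) (conj_sg G y (conj_sg G x W))
       = rr W (conj_sg G y (conj_sg G x W))"
      using cocycle[OF sW s1(1) s1(3) m1 m2] by blast
    have k2: "rr (conj_sg G y W) (conj_sg G y (conj_sg G x W)) = rr W (conj_sg G x W)"
      using rr_conj[OF sW s1(2) y] by simp
    show ?thesis unfolding D_def using k k2 e1 stW x y by (simp add: mult.commute)
  qed
  have D1: "D s = 1" if s: "s \<in> W" for s
  proof -
    have "act \<alpha> s = \<alpha>" using s unfolding W_def vertex_stabilizer_def by auto
    then show ?thesis unfolding D_def W_def using rr_self[OF stsub] by simp
  qed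
  have Dpos: "D x > 0" for x
  proof -
    have "cm W (?st (act \<alpha> x))" unfolding W_def by (rule cmst)
    moreover have "subgroup (W \<inter> ?st (act \<alpha> x)) G" using sW stsub subgroups_Inter_pair by blast
    ultimately show ?thesis unfolding D_def rr_def cm_def
      using card_cos_pos[OF sW] card_cos_pos[OF stsub] by simp
  qed
  have Drat: "D x \<in> \<rat>" for x unfolding D_def rr_def by (simp add: Rats_divide)
  have Done: "D \<one>\<^bsub>G\<^esub> = 1" using D1 subgroup.one_closed[OF sW] by blast
  have Dinv: "D (inv\<^bsub>G\<^esub> x) = 1 / D x" if x: "x \<in> carrier G" for x
  proof -
    have "D x * D (inv\<^bsub>G\<^esub> x) = 1" using Dmult[of x "inv\<^bsub>G\<^esub> x"] x Done by simp
    then show ?thesis using Dpos[of x] by (simp add: field_simps)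
  qed
  have Dpt: "D x = D y" if "act \<alpha> x = act \<alpha> y" for x y unfolding D_def using that by simp
  have orb: "real (card (stab_orbit G act \<alpha> (act \<alpha> x))) / real (card (stab_orbit G act \<alpha> (act \<alpha> (inv\<^bsub>G\<^esub> x)))) = D x"
    if x: "x \<in> carrier G" for x
  proof -
    have ix: "inv\<^bsub>G\<^esub> x \<in> carrier G" using x by simp
    have n: "card (stab_orbit G act \<alpha> (act \<alpha> x)) = card (cos (W \<inter> conj_sg G x W) W)"
      using orbit_card[OF cag] stW[OF x] unfolding W_def by simp
    have sI: "subgroup (W \<inter> conj_sg G (inv\<^bsub>G\<^esub> x) W) G"
      using sW conj_subgroup[OF sW ix] subgroups_Inter_pair by blast
    have cc: "conj_sg G x (conj_sg G (inv\<^bsub>G\<^esub> x) W) = W"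
      using conj_conj[OF Wc ix x] conj_one_sg[OF Wc] x by simp
    have ci: "conj_sg G x (W \<inter> conj_sg G (inv\<^bsub>G\<^esub> x) W) = W \<inter> conj_sg G x W"
      using conj_Int[OF Wc conj_sg_carrier[OF Wc ix] x] cc by (simp add: Int_commute)
    have "card (stab_orbit G act \<alpha> (act \<alpha> (inv\<^bsub>G\<^esub> x))) = card (cos (W \<inter> conj_sg G (inv\<^bsub>G\<^esub> x) W) W)"
      using orbit_card[OF cag] stW[OF ix] unfolding W_def by simp
    also have "\<dots> = card (cos (W \<inter> conj_sg G x W) (conj_sg G x W))"
      using idx_conj[OF sI Wc x] ci by simp
    finally show ?thesis using n unfolding D_def rr_def stW[OF x] by simp
  qed
  define Bs where "Bs = {stab_orbit G act \<alpha> v | v. E \<alpha> v}"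
  have gB: "\<And>B. B \<in> Bs \<Longrightarrow> g B \<in> carrier G \<and> act \<alpha> (g B) \<in> B" using assms(4) unfolding Bs_def by blast
  define S where "S = (\<lambda>B. D (g B)) ` Bs"
  have Seq: "(\<lambda>B. real (card (stab_orbit G act \<alpha> (act \<alpha> (g B))))
                   / real (card (stab_orbit G act \<alpha> (act \<alpha> (inv\<^bsub>G\<^esub> (g B)))))) ` Bs = S"
    unfolding S_def by (rule image_cong[OF refl]) (use orb gB in blast)
  have img: "modular_function G T ` carrier G = D ` carrier G"
    by (rule image_cong[OF refl]) (use mod_eq in blast)
  have sub1: "generate pos_real_group S \<subseteq> D ` carrier G"
  proof
    fix z assume "z \<in> generate pos_real_group S"
    then show "z \<in> D ` carrier G"
    proof (induction rule: generate.induct)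
      case one
      then show ?case using Done by (metis image_eqI one_closed pos_simps(2))
    next
      case (incl h)
      then show ?case unfolding S_def using gB by blast
    next
      case (inv h)
      then obtain B where B: "B \<in> Bs" "h = D (g B)" unfolding S_def by blast
      have "inv\<^bsub>pos_real_group\<^esub> h = D (inv\<^bsub>G\<^esub> (g B))"
        using pos_inv[OF Dpos[of "g B"]] Dinv gB B by simp
      then show ?case using gB B by (metis image_eqI inv_closed)
    next
      case (eng h1 h2)
      then obtain x y where "x \<in> carrier G" "y \<in> carrier G" "h1 = D x" "h2 = D y" by blast
      then show ?case using Dmult pos_simps(3) by (metis image_eqI m_closed)
    qed
  qed
  have step: "\<forall>h\<in>carrier G. act \<alpha> h = v \<longrightarrow> D h \<in> generate pos_real_group S" if "E\<^sup>*\<^sup>* \<alpha> v" for v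
    using that
  proof (induction rule: rtranclp_induct)
    case base
    show ?case
    proof (intro ballI impI)
      fix h assume "h \<in> carrier G" "act \<alpha> h = \<alpha>"
      then have "h \<in> W" unfolding W_def vertex_stabilizer_def by simp
      then have "D h = \<one>\<^bsub>pos_real_group\<^esub>" using D1 pos_simps(2) by simp
      then show "D h \<in> generate pos_real_group S" using generate.one by metis
    qed
  next
    case (step u v)
    show ?case
    proof (intro ballI impI)
      fix h assume h: "h \<in> carrier G" "act \<alpha> h = v"
      obtain h' where h': "h' \<in> carrier G" "act \<alpha> h' = u" using cag_trans[OF cag, of \<alpha> u] by blast
      define w where "w = act \<alpha> (h \<otimes>\<^bsub>G\<^esub> inv\<^bsub>G\<^esub> h')"
      have hh: "h \<otimes>\<^bsub>G\<^esub> inv\<^bsub>G\<^esub> h' \<in> carrier G" using h h' by simp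
      have "E (act u (inv\<^bsub>G\<^esub> h')) (act v (inv\<^bsub>G\<^esub> h'))" using cag_inv[OF cag _ step.hyps(2)] h' by simp
      moreover have "act u (inv\<^bsub>G\<^esub> h') = \<alpha>" using h' act_mult[OF cag, of h' "inv\<^bsub>G\<^esub> h'" \<alpha>] act_one[OF cag] by simp
      moreover have "act v (inv\<^bsub>G\<^esub> h') = w" using h h' act_mult[OF cag, of h "inv\<^bsub>G\<^esub> h'" \<alpha>] unfolding w_def by simp
      ultimately have Ew: "E \<alpha> w" by simp
      define B where "B = stab_orbit G act \<alpha> w"
      have B: "B \<in> Bs" unfolding Bs_def B_def using Ew by blast
      obtain k where k: "k \<in> W" "act \<alpha> (g B) = act w k"
        using gB[OF B] unfolding B_def stab_orbit_def W_def by blast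
      have kc: "k \<in> carrier G" using k Wc by auto
      have "act \<alpha> (g B) = act \<alpha> (h \<otimes>\<^bsub>G\<^esub> inv\<^bsub>G\<^esub> h' \<otimes>\<^bsub>G\<^esub> k)" using k kc hh act_mult[OF cag, of "h \<otimes>\<^bsub>G\<^esub> inv\<^bsub>G\<^esub> h'" k \<alpha>] unfolding w_def by simp
      then have "D (g B) = D (h \<otimes>\<^bsub>G\<^esub> inv\<^bsub>G\<^esub> h' \<otimes>\<^bsub>G\<^esub> k)" by (rule Dpt)
      also have "\<dots> = D h * D (inv\<^bsub>G\<^esub> h')" using Dmult hh kc D1[OF k(1)] h h' by simp
      also have "\<dots> = D h / D h'" using Dinv h' by simp
      finally have "D h = D (g B) * D h'" using Dpos[of h'] by (simp add: field_simps)
      moreover have "D (g B) \<in> generate pos_real_group S" using B unfolding S_def by (blast intro: generate.incl)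
      moreover have "D h' \<in> generate pos_real_group S" using step.IH h' by blast
      ultimately show "D h \<in> generate pos_real_group S"
        using generate.eng[of "D (g B)" pos_real_group S "D h'"] pos_simps(3) by simp
    qed
  qed
  have sub2: "D ` carrier G \<subseteq> generate pos_real_group S"
  proof
    fix z assume "z \<in> D ` carrier G"
    then obtain x where x: "x \<in> carrier G" "z = D x" by blast
    have "E\<^sup>*\<^sup>* \<alpha> (act \<alpha> x)" using cag_conn[OF cag] .
    then show "z \<in> generate pos_real_group S" using step x by blast
  qed
  have "D ` carrier G \<subseteq> \<rat> \<inter> {x. x > 0}" using Drat Dpos by blast
  moreover have "modular_function G T ` carrier G = generate pos_real_group S" using img sub1 sub2 by simp
  ultimately show ?thesis using img Seq unfolding Bs_def by simp
qed



end
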